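(* If $\mathcal{O}$ is a decomposable set of upwards closed modalities, then for all sets $X,Y$ and relations $R\subseteq X\times Y$: (1) $x\,R\,y$ implies $\eta(x)\,\mathcal{O}(R)\,\eta(y)$; (2) for $t\in TTX$, $r\in TTY$, $t\,\mathcal{O}(\mathcal{O}(R))\,r$ implies $\mu t\,\mathcal{O}(R)\,\mu r$.
   Context: $\Sigma$ is a signature of effect operations with arities $\alpha^n\to\alpha$, $\mathbf{N}\times\alpha^n\to\alpha$, $\alpha^{\mathbf{N}}\to\alpha$ or $\mathbf{N}\times\alpha^{\mathbf{N}}\to\alpha$. $TX$ is the set of possibly infinite labelled trees with leaves $\bot$ or elements of $X$ and internal nodes labelled by operations (or $\sigma_m$, $m\in\mathbb{N}$) with children according to arity; $t\le t'$ iff $t$ is obtained from $t'$ by replacing subtrees with $\bot$. $\eta(x)$ is the leaf $x$; $\mu:TTX\to TX$ replaces each leaf of a tree of trees by that tree. $\mathbf{1}=\{*\}$. A set $\mathcal{O}$ of modalities is given with $[\![o]\!]\subseteq T\mathbf{1}$; upwards closed means $[\![o]\!]$ upward closed under $\le$. $t[\in P]\in T\mathbf{1}$ replaces leaves in $P$ by $*$ and other $X$-leaves by $\bot$; $o(A)=\{t\in TX\mid t[\in A]\in[\![o]\!]\}$. $R[A]=\{y\mid\exists x\in A,\ xRy\}$; $\mathcal{O}$-relator: $t\,\mathcal{O}(R)\,t'$ iff $\forall A\subseteq X\ \forall o\in\mathcal{O}$, $t\in o(A)\Rightarrow t'\in o(R[A])$. $\mathcal{T}$ is the least class of formulas containing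 $o(\top),o(\bot)$ closed under arbitrary $\bigvee,\bigwedge$, with $[\![o(\top)]\!]=o(\{*\})$, $[\![o(\bot)]\!]=o(\emptyset)$, unions/intersections; $t\trianglelefteq t'$ on $T\mathbf{1}$ iff $\forall\Phi\in\mathcal{T}$, $t\in[\![\Phi]\!]\Rightarrow t'\in[\![\Phi]\!]$; $r\preccurlyeq r'$ on $TT\mathbf{1}$ iff $\forall o\,\forall\Phi\in\mathcal{T}$, $r\in o([\![\Phi]\!])\Rightarrow r'\in o([\![\Phi]\!])$. $\mathcal{O}$ is decomposable if $r\preccurlyeq r'$ implies $\mu r\trianglelefteq\mu r'$. *)

theory Defs
  imports Main
begin

text \<open>A label l has
  arity ar l :: nat option (Some n: n children, None: countably many children,
  i.e. arity alpha^N).  Operations with a natural-number parameter (N x alpha^n etc.)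
  and the auxiliary nodes sigma_m are simply labels (op, m).  Children are indexed
  by nat; for a label of finite arity n the children with index >= n are unused and
  required to be Bot (well-formedness, predicate in_trees).\<close>

codatatype ('l, 'x) tree = Bot | Leaf 'x | Node 'l "nat \<Rightarrow> ('l, 'x) tree"

coinductive in_trees :: "('l \<Rightarrow> nat option) \<Rightarrow> 'x set \<Rightarrow> ('l, 'x) tree \<Rightarrow> bool"
  for ar :: "'l \<Rightarrow> nat option" and S :: "'x set" where
  bot: "in_trees ar S Bot"
| leaf: "x \<in> S \<Longrightarrow> in_trees ar S (Leaf x)"
| node: "(\<And>i. in_trees ar S (ts i)) \<Longrightarrow> (\<And>n i. ar l = Some n \<Longrightarrow> n \<le> i \<Longrightarrow> ts i = Bot)
         \<Longrightarrow> in_trees ar S (Node l ts)"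

definition trees :: "('l \<Rightarrow> nat option) \<Rightarrow> 'x set \<Rightarrow> ('l, 'x) tree set" where
  "trees ar S = {t. in_trees ar S t}"

text \<open>Monad structure: eta is Leaf; bind substitutes leaves; mu = bind id.\<close>
primcorec tbind :: "('l, 'x) tree \<Rightarrow> ('x \<Rightarrow> ('l, 'y) tree) \<Rightarrow> ('l, 'y) tree" where
  "tbind t f = (case t of
      Bot \<Rightarrow> Bot
    | Leaf x \<Rightarrow> (case f x of Bot \<Rightarrow> Bot | Leaf y \<Rightarrow> Leaf y | Node l us \<Rightarrow> Node l us)
    | Node l ts \<Rightarrow> Node l (\<lambda>i. tbind (ts i) f))"

definition tmu :: "('l, ('l, 'x) tree) tree \<Rightarrow> ('l, 'x) tree" where
  "tmu t = tbind t id"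

coinductive tle :: "('l, 'x) tree \<Rightarrow> ('l, 'x) tree \<Rightarrow> bool" where
  "tle Bot t"
| "tle (Leaf x) (Leaf x)"
| "(\<And>i. tle (ts i) (us i)) \<Longrightarrow> tle (Node l ts) (Node l us)"

definition leafsub :: "'x set \<Rightarrow> ('l, 'x) tree \<Rightarrow> ('l, unit) tree" where
  "leafsub P t = tbind t (\<lambda>x. if x \<in> P then Leaf () else Bot)"

definition modal :: "('l \<Rightarrow> nat option) \<Rightarrow> ('o \<Rightarrow> ('l, unit) tree set) \<Rightarrow> 'x set \<Rightarrow> 'o
                     \<Rightarrow> 'x set \<Rightarrow> ('l, 'x) tree set" where
  "modal ar sem X m A = {t \<in> trees ar X. leafsub A t \<in> sem m}"

definition orel :: "('l \<Rightarrow> nat option) \<Rightarrow> ('o \<Rightarrow> ('l, unit) tree set) \<Rightarrow> 'o set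
                    \<Rightarrow> 'x set \<Rightarrow> 'y set \<Rightarrow> ('x \<times> 'y) set \<Rightarrow> (('l, 'x) tree \<times> ('l, 'y) tree) set" where
  "orel ar sem Ops X Y R = {(t, t'). t \<in> trees ar X \<and> t' \<in> trees ar Y \<and>
     (\<forall>A \<subseteq> X. \<forall>m \<in> Ops. t \<in> modal ar sem X m A \<longrightarrow> t' \<in> modal ar sem Y m (R `` A))}"

definition upclosed :: "('l \<Rightarrow> nat option) \<Rightarrow> ('l, unit) tree set \<Rightarrow> bool" where
  "upclosed ar P \<longleftrightarrow> (\<forall>t \<in> P. \<forall>t' \<in> trees ar UNIV. tle t t' \<longrightarrow> t' \<in> P)"

text \<open>Denotations of the infinitary formulas in the class \<T> (subsets of T 1).\<close>
inductive_set tsem :: "('l \<Rightarrow> nat option) \<Rightarrow> ('o \<Rightarrow> ('l, unit) tree set) \<Rightarrow> 'o set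
                       \<Rightarrow> ('l, unit) tree set set"
  for ar sem Ops where
  top: "m \<in> Ops \<Longrightarrow> modal ar sem UNIV m {()} \<in> tsem ar sem Ops"
| bot: "m \<in> Ops \<Longrightarrow> modal ar sem UNIV m {} \<in> tsem ar sem Ops"
| disj: "\<forall>\<Phi> \<in> S. \<Phi> \<in> tsem ar sem Ops \<Longrightarrow> \<Union>S \<in> tsem ar sem Ops"
| conj: "\<forall>\<Phi> \<in> S. \<Phi> \<in> tsem ar sem Ops \<Longrightarrow> \<Inter>S \<inter> trees ar UNIV \<in> tsem ar sem Ops"

definition tleq1 :: "('l \<Rightarrow> nat option) \<Rightarrow> ('o \<Rightarrow> ('l, unit) tree set) \<Rightarrow> 'o set
                     \<Rightarrow> ('l, unit) tree \<Rightarrow> ('l, unit) tree \<Rightarrow> bool" where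
  "tleq1 ar sem Ops t t' \<longleftrightarrow> (\<forall>\<Phi> \<in> tsem ar sem Ops. t \<in> \<Phi> \<longrightarrow> t' \<in> \<Phi>)"

definition tleq2 :: "('l \<Rightarrow> nat option) \<Rightarrow> ('o \<Rightarrow> ('l, unit) tree set) \<Rightarrow> 'o set
                     \<Rightarrow> ('l, ('l, unit) tree) tree \<Rightarrow> ('l, ('l, unit) tree) tree \<Rightarrow> bool" where
  "tleq2 ar sem Ops r r' \<longleftrightarrow> (\<forall>m \<in> Ops. \<forall>\<Phi> \<in> tsem ar sem Ops.
      r \<in> modal ar sem (trees ar UNIV) m \<Phi> \<longrightarrow> r' \<in> modal ar sem (trees ar UNIV) m \<Phi>)"

definition decomposable :: "('l \<Rightarrow> nat option) \<Rightarrow> ('o \<Rightarrow> ('l, unit) tree set) \<Rightarrow> 'o set \<Rightarrow> bool" where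
  "decomposable ar sem Ops \<longleftrightarrow> (\<forall>r \<in> trees ar (trees ar UNIV). \<forall>r' \<in> trees ar (trees ar UNIV).
      tleq2 ar sem Ops r r' \<longrightarrow> tleq1 ar sem Ops (tmu r) (tmu r'))"

end

theory Submission
  imports Defs
begin

lemma tbind_Bot[simp]: "tbind Bot f = Bot"
  by (subst tbind.code) simp
lemma tbind_Leaf[simp]: "tbind (Leaf x) f = f x"
  by (subst tbind.code) (simp split: tree.split)
lemma tbind_Node[simp]: "tbind (Node l ts) f = Node l (\<lambda>i. tbind (ts i) f)"
  by (subst tbind.code) simp

lemma tbind_assoc: "tbind (tbind t f) g = tbind t (\<lambda>x. tbind (f x) g)"
proof (coinduction arbitrary: t rule: tree.coinduct_strong)
  case (Eq_tree t)
  show ?case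
  proof (cases t)
    case Bot then show ?thesis by simp
  next
    case (Leaf x)
    then show ?thesis by (cases "tbind (f x) g") (auto simp: rel_fun_def)
  next
    case (Node l ts)
    then show ?thesis by (auto simp: rel_fun_def)
  qed
qed

lemma tbind_Leaf_right: "tbind t Leaf = t"
proof (coinduction arbitrary: t rule: tree.coinduct_strong)
  case (Eq_tree t)
  show ?case by (cases t) (auto simp: rel_fun_def)
qed

lemma tbind_cong: "in_trees ar S t \<Longrightarrow> (\<forall>x\<in>S. f x = g x) \<Longrightarrow> tbind t f = tbind t g"
proof (coinduction arbitrary: t rule: tree.coinduct_strong)
  case (Eq_tree t)
  show ?case
  proof (cases t)
    case Bot then show ?thesis by simp
  next
    case (Leaf x)
    with Eq_tree have "x \<in> S" by (auto elim: in_trees.cases)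
    with Eq_tree Leaf have "tbind t f = tbind t g" by simp
    then show ?thesis by (auto simp: rel_fun_def)
  next
    case (Node l ts)
    with Eq_tree have "\<And>i. in_trees ar S (ts i)" by (auto elim: in_trees.cases)
    with Eq_tree Node show ?thesis by (auto simp: rel_fun_def)
  qed
qed

lemma in_trees_tbind:
  "in_trees ar S t \<Longrightarrow> \<forall>x\<in>S. in_trees ar S' (f x) \<Longrightarrow> in_trees ar S' (tbind t f)"
proof (coinduction arbitrary: t rule: in_trees.coinduct)
  case in_trees
  note h = in_trees
  show ?case
  proof (cases t)
    case Bot then show ?thesis by simp
  next
    case (Leaf x)
    with h have "x \<in> S" by (auto elim: in_trees.cases)
    with h have "in_trees ar S' (f x)" by blast
    then show ?thesis using Leaf by (auto elim: in_trees.cases)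
  next
    case (Node l ts)
    with h have "\<And>i. in_trees ar S (ts i)" "\<And>n i. ar l = Some n \<Longrightarrow> n \<le> i \<Longrightarrow> ts i = Bot"
      by (auto elim: in_trees.cases)
    then show ?thesis using Node h by auto
  qed
qed

lemma leafsub_mono: "C \<subseteq> C' \<Longrightarrow> tle (leafsub C t) (leafsub C' t)"
  unfolding leafsub_def
proof (coinduction arbitrary: t rule: tle.coinduct)
  case tle
  then show ?case by (cases t) auto
qed

lemma leafsub_unit: "leafsub {()} u = u"
proof -
  have "(\<lambda>x::unit. if x \<in> {()} then Leaf () else Bot) = Leaf" by auto
  then show ?thesis unfolding leafsub_def by (simp add: tbind_Leaf_right)
qed

lemma in_trees_leafsub: "in_trees ar S s \<Longrightarrow> in_trees ar UNIV (leafsub A s)"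
  unfolding leafsub_def by (erule in_trees_tbind) (auto intro: in_trees.intros)

lemma leafsub_empty: "leafsub {} (leafsub A s) = leafsub {} s"
  unfolding leafsub_def tbind_assoc by (rule arg_cong[where f="tbind s"]) auto

lemma mu_leafsub: "leafsub A (tmu t) = tmu (tbind t (\<lambda>s. Leaf (leafsub A s)))"
  unfolding tmu_def by (simp add: tbind_assoc leafsub_def)

lemma leafsub_map: "leafsub C (tbind t (\<lambda>s. Leaf (h s))) = tbind t (\<lambda>s. if h s \<in> C then Leaf () else Bot)"
  unfolding leafsub_def by (simp add: tbind_assoc)

lemma phi:
  assumes "\<Phi> \<in> tsem ar sem Ops"
  shows "(s, s') \<in> orel ar sem Ops X Y R \<Longrightarrow> A \<subseteq> X \<Longrightarrow> leafsub A s \<in> \<Phi> \<Longrightarrow> leafsub (R `` A) s' \<in> \<Phi>"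
  using assms
proof (induction arbitrary: s s' rule: tsem.induct)
  case (top m)
  then have s: "s \<in> trees ar X" "s' \<in> trees ar Y" by (auto simp: orel_def)
  from top have "leafsub A s \<in> sem m" by (simp add: modal_def leafsub_unit)
  with s have "s \<in> modal ar sem X m A" by (simp add: modal_def)
  with top have "s' \<in> modal ar sem Y m (R `` A)" by (auto simp: orel_def)
  with s show ?case
    by (auto simp: modal_def leafsub_unit trees_def intro: in_trees_leafsub)
next
  case (bot m)
  then have s: "s \<in> trees ar X" "s' \<in> trees ar Y" by (auto simp: orel_def)
  from bot have "leafsub {} s \<in> sem m" by (simp add: modal_def leafsub_empty)
  with s have "s \<in> modal ar sem X m {}" by (simp add: modal_def)
  with bot have "s' \<in> modal ar sem Y m (R `` {})" by (auto simp: orel_def)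
  with s show ?case
    by (auto simp: modal_def leafsub_empty trees_def intro: in_trees_leafsub)
next
  case (disj S)
  then show ?case by blast
next
  case (conj S)
  then have "s' \<in> trees ar Y" by (auto simp: orel_def)
  with conj show ?case by (auto simp: trees_def intro: in_trees_leafsub)
qed

theorem lemma5p8:
  fixes ar :: "'l \<Rightarrow> nat option"
    and sem :: "'o \<Rightarrow> ('l, unit) tree set"
    and Ops :: "'o set"
    and X :: "'x set" and Y :: "'y set" and R :: "('x \<times> 'y) set"
  assumes modalities: "\<forall>m \<in> Ops. sem m \<subseteq> trees ar UNIV"
    and up: "\<forall>m \<in> Ops. upclosed ar (sem m)"
    and dec: "decomposable ar sem Ops"
    and R: "R \<subseteq> X \<times> Y"
  shows "(\<forall>x y. (x, y) \<in> R \<longrightarrow> (Leaf x, Leaf y) \<in> orel ar sem Ops X Y R)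
    \<and> (\<forall>t r. t \<in> trees ar (trees ar X) \<longrightarrow> r \<in> trees ar (trees ar Y) \<longrightarrow>
          (t, r) \<in> orel ar sem Ops (trees ar X) (trees ar Y) (orel ar sem Ops X Y R) \<longrightarrow>
          (tmu t, tmu r) \<in> orel ar sem Ops X Y R)"
proof (intro conjI allI impI)
  fix x y assume xy: "(x, y) \<in> R"
  with R have xy': "x \<in> X" "y \<in> Y" by auto
  show "(Leaf x, Leaf y) \<in> orel ar sem Ops X Y R"
    unfolding orel_def
  proof (simp only: mem_Collect_eq prod.case, intro conjI allI impI ballI)
    show "Leaf x \<in> trees ar X" "Leaf y \<in> trees ar Y"
      using xy' by (auto simp: trees_def intro: in_trees.intros)
    fix A m assume A: "A \<subseteq> X" and m: "m \<in> Ops" and lx: "Leaf x \<in> modal ar sem X m A"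
    have ly: "leafsub (R `` A) (Leaf y) \<in> trees ar UNIV"
      by (auto simp: leafsub_def trees_def intro: in_trees.intros)
    show "Leaf y \<in> modal ar sem Y m (R `` A)"
    proof (cases "x \<in> A")
      case True
      with xy have "y \<in> R `` A" by auto
      with True lx xy' show ?thesis by (simp add: modal_def leafsub_def trees_def in_trees.leaf)
    next
      case False
      with lx have "Bot \<in> sem m" by (simp add: modal_def leafsub_def)
      with up m ly have "leafsub (R `` A) (Leaf y) \<in> sem m"
        unfolding upclosed_def by (auto intro: tle.intros)
      with xy' show ?thesis by (simp add: modal_def trees_def in_trees.leaf)
    qed
  qed
next
  fix t r
  assume t: "t \<in> trees ar (trees ar X)" and r: "r \<in> trees ar (trees ar Y)"
    and tr: "(t, r) \<in> orel ar sem Ops (trees ar X) (trees ar Y) (orel ar sem Ops X Y R)"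
  let ?O = "orel ar sem Ops X Y R"
  have idX: "\<forall>s\<in>trees ar X. in_trees ar X (id s)" and idY: "\<forall>s\<in>trees ar Y. in_trees ar Y (id s)"
    by (auto simp: trees_def)
  have mt: "tmu t \<in> trees ar X" using in_trees_tbind[OF _ idX] t by (auto simp: trees_def tmu_def id_def)
  have mr: "tmu r \<in> trees ar Y" using in_trees_tbind[OF _ idY] r by (auto simp: trees_def tmu_def id_def)
  show "(tmu t, tmu r) \<in> ?O"
    unfolding orel_def
  proof (simp only: mem_Collect_eq prod.case, intro conjI allI impI ballI mt mr)
    fix A m assume A: "A \<subseteq> X" and m: "m \<in> Ops" and mtA: "tmu t \<in> modal ar sem X m A"
    define h :: "('l, 'x) tree \<Rightarrow> ('l, unit) tree" where "h = leafsub A"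
    define h' :: "('l, 'y) tree \<Rightarrow> ('l, unit) tree" where "h' = leafsub (R `` A)"
    define t' where "t' = tbind t (\<lambda>s. Leaf (h s))"
    define r' where "r' = tbind r (\<lambda>s. Leaf (h' s))"
    have t'T: "t' \<in> trees ar (trees ar UNIV)" unfolding t'_def h_def using t
      by (auto simp: trees_def intro!: in_trees_tbind[where S="trees ar X"] in_trees.leaf in_trees_leafsub)
    have r'T: "r' \<in> trees ar (trees ar UNIV)" unfolding r'_def h'_def using r
      by (auto simp: trees_def intro!: in_trees_tbind[where S="trees ar Y"] in_trees.leaf in_trees_leafsub)
    have "tleq2 ar sem Ops t' r'"
      unfolding tleq2_def
    proof (intro ballI impI)
      fix m' \<Phi> assume m': "m' \<in> Ops" and \<Phi>: "\<Phi> \<in> tsem ar sem Ops"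
        and t'm: "t' \<in> modal ar sem (trees ar UNIV) m' \<Phi>"
      define B where "B = {s \<in> trees ar X. h s \<in> \<Phi>}"
      define B' where "B' = {s. h' s \<in> \<Phi>}"
      have "leafsub \<Phi> t' = tbind t (\<lambda>s. if h s \<in> \<Phi> then Leaf () else Bot)"
        unfolding t'_def by (rule leafsub_map)
      also have "\<dots> = leafsub B t" unfolding leafsub_def B_def
        using t by (intro tbind_cong[where S="trees ar X"]) (auto simp: trees_def)
      finally have "leafsub B t \<in> sem m'" using t'm by (simp add: modal_def)
      with t have "t \<in> modal ar sem (trees ar X) m' B" by (simp add: modal_def)
      moreover have "B \<subseteq> trees ar X" by (auto simp: B_def)
      ultimately have "r \<in> modal ar sem (trees ar Y) m' (?O `` B)" using tr m' by (auto simp: orel_def)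
      then have rO: "leafsub (?O `` B) r \<in> sem m'" by (simp add: modal_def)
      have "?O `` B \<subseteq> B'"
      proof
        fix s' assume "s' \<in> ?O `` B"
        then obtain s where "(s, s') \<in> ?O" "s \<in> B" by auto
        then show "s' \<in> B'" unfolding B_def B'_def h_def h'_def using phi[OF \<Phi>] A by blast
      qed
      then have le: "tle (leafsub (?O `` B) r) (leafsub B' r)" by (rule leafsub_mono)
      have "leafsub B' r \<in> trees ar UNIV" using r by (auto simp: trees_def intro: in_trees_leafsub)
      with le rO up m' have "leafsub B' r \<in> sem m'" unfolding upclosed_def by blast
      moreover have "leafsub \<Phi> r' = leafsub B' r"
        unfolding r'_def leafsub_map B'_def by (simp add: leafsub_def)
      ultimately show "r' \<in> modal ar sem (trees ar UNIV) m' \<Phi>" using r'T by (simp add: modal_def)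
    qed
    with dec t'T r'T have le1: "tleq1 ar sem Ops (tmu t') (tmu r')" by (auto simp: decomposable_def)
    have tmuT: "tmu t' \<in> trees ar UNIV" "tmu r' \<in> trees ar UNIV"
      using t'T r'T by (auto simp: tmu_def trees_def intro!: in_trees_tbind[where S="trees ar UNIV"])
    have "tmu t' = leafsub A (tmu t)" unfolding t'_def h_def by (simp add: mu_leafsub)
    with mtA tmuT have "tmu t' \<in> modal ar sem UNIV m {()}" by (simp add: modal_def leafsub_unit)
    moreover have "modal ar sem UNIV m {()} \<in> tsem ar sem Ops" using m by (rule tsem.top)
    ultimately have "tmu r' \<in> modal ar sem UNIV m {()}" using le1 by (auto simp: tleq1_def)
    moreover have "tmu r' = leafsub (R `` A) (tmu r)" unfolding r'_def h'_def by (simp add: mu_leafsub)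
    ultimately show "tmu r \<in> modal ar sem Y m (R `` A)" using mr by (simp add: modal_def leafsub_unit)
  qed
qed

end
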